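(* Let $\varphi=\ell(p_1)\wedge\dots\wedge\ell(p_n)$, where the $p_i\in At$ are distinct and each $\ell(p_i)\in\{p_i,\neg p_i\}$. Let $(\mathcal{M},w)$ be a pointed Kripke model with $(\mathcal{M},w)\vDash\varphi$, and let $a\in Ag$. Let $S\subseteq At(\varphi)$ be the unique set such that $(\mathcal{M},w)\vDash\bigwedge_{p\in S}\mathsf{h}_a p\wedge\bigwedge_{p\in At(\varphi)\setminus S}\neg\mathsf{h}_a p$, and let $\varphi_S=\bigwedge_{p\in S}\ell(p)$. Then $\mathcal{F}(\varphi)$ and $\mathcal{F}(\varphi_S)$ are both applicable in $(\mathcal{M},w)$. Write $(\mathcal{M},w)\otimes\mathcal{F}(\varphi)=(\mathcal{M}^\varphi,(w,e))$ with $\mathcal{M}^\varphi=(W^\varphi,R^\varphi,V^\varphi)$, and $(\mathcal{M},w)\otimes\mathcal{F}(\varphi_S)=(\mathcal{M}^{\varphi_S},(w,e'))$ with $\mathcal{M}^{\varphi_S}=(W^{\varphi_S},R^{\varphi_S},V^{\varphi_S})$. Then: (1) $R^\varphi_a[(w,e)]=R^{\varphi_S}_a[(w,e')]$; (2) for every $(v,f)\in R^\varphi_a[(w,e)]$, the pointed models $(\mathcal{M}^\varphi,(v,f))$ and $(\mathcal{M}^{\varphi_S},(v,f))$ are bisimilar.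
   Context: $Ag$ is a finite set of agents and $At$ a finite set of propositional atoms. $H=\{\mathsf{h}_a p: a\in Ag, p\in At\}$ is the set of attention atoms; $\mathsf{h}_a p$ reads "$a$ pays attention to whether $p$". Language $\mathcal{L}$: $\varphi::=\top\mid p\mid \mathsf{h}_a p\mid\neg\varphi\mid\varphi\wedge\varphi\mid B_a\varphi\mid[\mathcal{E}]\varphi$, with $\mathcal{E}$ a multi-pointed event model. $At(\varphi)$ is the set of atoms of $At$ occurring in $\varphi$. Conjunctions of literals: - Literals are atoms in $At\cup H\cup\{\top\}$ or their negations. - Conjunctions of literals are kept in a normal form: each atom occurs at most once; $\top$ is not a conjunct unless the formula is $\top$; the order is fixed. The empty conjunction is $\top$. - For a conjunction of literals $e$, "$\ell\in e$" means $\ell$ is a conjunct of $e$. Kripke models: - A Kripke model is $\mathcal{M}=(W,R,V)$ with $W$ finite nonempty, $R_a\subseteq W^2$ for each $a$, and $V:W\to\mathcal{P}(At\cup H)$. - For a relation $R_a$ and a state $x$, $R_a[x]=\{y:(x,y)\in R_a\}$. Event models: - An event model is $(E,Q,pre)$ with $E$ finite nonempty, $Q_a\subseteq E^2$ for each $a$, and $pre:E\to\mathcal{L}$. A multi-pointed event model adds $E_d\subseteq E$. - Product update: $\mathcal{M}\otimes\mathcal{E}=(W',R',V')$ where $W'=\{(w,e):(\mathcal{M},w)\vDash pre(e)\}$, $R'_a=\{((w,e),(v,f))\in W'^2:(w,v)\in R_a,(e,f)\in Q_a\}$, and $V'((w,e))=V(w)$. - $(\mathcal{E},E_d)$ is applicable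 in $(\mathcal{M},w)$ iff there is a unique $e\in E_d$ with $(\mathcal{M},w)\vDash pre(e)$. In that case $(\mathcal{M},w)\otimes(\mathcal{E},E_d)=(\mathcal{M}\otimes\mathcal{E},(w,e))$. Satisfaction: - $q\in At\cup H$ holds at $w$ iff $q\in V(w)$; Boolean connectives are standard. - $B_a\varphi$ holds at $w$ iff $\varphi$ holds at all $R_a$-successors of $w$. - $[\mathcal{E}]\varphi$ holds at $(\mathcal{M},w)$ iff, if $\mathcal{E}$ is applicable in $(\mathcal{M},w)$, then $(\mathcal{M},w)\otimes\mathcal{E}\vDash\varphi$. Propositional attention event model $\mathcal{F}(\varphi)$, for $\varphi=\ell(p_1)\wedge\dots\wedge\ell(p_n)$ as in the claim (including $\varphi=\top$ when $n=0$): - It is $((E,Q,id_E),E_d)$, so each event is a formula and is its own precondition. - Events: $E$ is the set of all normal-form conjunctions $\bigwedge_{p\in S'}\ell(p)\wedge\bigwedge_{b\in Ag}\big(\bigwedge_{p\in X_b}\mathsf{h}_b p\wedge\bigwedge_{p\in S'\setminus X_b}\neg\mathsf{h}_b p\big)$, for $S'\subseteq At(\varphi)$ and $X_b\subseteq S'$ for each $b\in Ag$. - Relations: $(e,f)\in Q_b$ iff for all $p\in At(\varphi)$ both of the following hold: - (Attentiveness) if $\mathsf{h}_b p\in e$ then $\mathsf{h}_b p\in f$ and $\ell(p)\in f$; - (Inertia) if $\mathsf{h}_b p\notin e$ then $\ell(p)\notin f$. - Designated events: $E_d$ is the set of events containing every literal of $\varphi$. Bisimulation is the standard notion for Kripke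 models over all agents in $Ag$ and atoms in $At\cup H$: agreement on atoms, plus forth and back conditions for each $R_a$. *)

theory Defs
  imports Main
begin

text \<open>Propositional atoms p and attention atoms h_a p.\<close>
datatype ('ag, 'at) patom = P 'at | H 'ag 'at

text \<open>A normal-form conjunction of literals over At \<union> H: each atom occurs at most once,
  with a fixed polarity. It is represented by the partial map sending an atom to
  Some True (positive literal), Some False (negated literal) or None (does not occur).
  The empty conjunction (\<lambda>_. None) is \<top>. "l \<in> e" for l = (x, b) means e x = Some b.\<close>
type_synonym ('ag, 'at) lconj = "('ag, 'at) patom \<Rightarrow> bool option"

record ('ag, 'at, 'w) kmodel =
  kW :: "'w set"
  kR :: "'ag \<Rightarrow> ('w \<times> 'w) set"
  kV :: "'w \<Rightarrow> ('ag, 'at) patom set"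

definition kripke :: "('ag, 'at, 'w) kmodel \<Rightarrow> bool" where
  "kripke M \<longleftrightarrow> finite (kW M) \<and> kW M \<noteq> {} \<and> (\<forall>a. kR M a \<subseteq> kW M \<times> kW M)"

definition succs :: "('w \<times> 'w) set \<Rightarrow> 'w \<Rightarrow> 'w set" where
  "succs R x = {y. (x, y) \<in> R}"

definition sat_lc :: "('ag, 'at, 'w) kmodel \<Rightarrow> 'w \<Rightarrow> ('ag, 'at) lconj \<Rightarrow> bool" where
  "sat_lc M w e \<longleftrightarrow> (\<forall>x b. e x = Some b \<longrightarrow> (x \<in> kV M w \<longleftrightarrow> b))"

text \<open>Multi-pointed event models whose preconditions are conjunctions of literals.\<close>
record ('ag, 'at, 'e) evmodel =
  eE :: "'e set"
  eQ :: "'ag \<Rightarrow> ('e \<times> 'e) set"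
  epre :: "'e \<Rightarrow> ('ag, 'at) lconj"
  eEd :: "'e set"

definition product :: "('ag, 'at, 'w) kmodel \<Rightarrow> ('ag, 'at, 'e) evmodel \<Rightarrow> ('ag, 'at, 'w \<times> 'e) kmodel" where
  "product M Ev =
    (let W' = {(w, e). w \<in> kW M \<and> e \<in> eE Ev \<and> sat_lc M w (epre Ev e)} in
     \<lparr> kW = W',
       kR = (\<lambda>a. {((w, e), (v, f)). (w, e) \<in> W' \<and> (v, f) \<in> W' \<and> (w, v) \<in> kR M a \<and> (e, f) \<in> eQ Ev a}),
       kV = (\<lambda>(w, e). kV M w) \<rparr>)"

definition applicable :: "('ag, 'at, 'w) kmodel \<Rightarrow> 'w \<Rightarrow> ('ag, 'at, 'e) evmodel \<Rightarrow> bool" where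
  "applicable M w Ev \<longleftrightarrow> (\<exists>!e. e \<in> eEd Ev \<and> sat_lc M w (epre Ev e))"

text \<open>The designated event selected at w (meaningful when applicable); the updated
  pointed model is (product M Ev, (w, upd_point M w Ev)).\<close>
definition upd_point :: "('ag, 'at, 'w) kmodel \<Rightarrow> 'w \<Rightarrow> ('ag, 'at, 'e) evmodel \<Rightarrow> 'e" where
  "upd_point M w Ev = (THE e. e \<in> eEd Ev \<and> sat_lc M w (epre Ev e))"

text \<open>A conjunction of propositional literals l(p_1) \<and> ... \<and> l(p_n) with distinct p_i is
  given by a partial map L :: 'at \<Rightarrow> bool option (L p = Some True: conjunct p;
  Some False: conjunct \<not>p). At(\<phi>) = dom L.\<close>
definition prop_conj :: "('at \<Rightarrow> bool option) \<Rightarrow> ('ag, 'at) lconj" where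
  "prop_conj L = (\<lambda>x. case x of P p \<Rightarrow> L p | H _ _ \<Rightarrow> None)"

text \<open>The events of F(\<phi>): for S' \<subseteq> At(\<phi>) and X_b \<subseteq> S',
  \<And>_{p\<in>S'} l(p) \<and> \<And>_b (\<And>_{p\<in>X_b} h_b p \<and> \<And>_{p\<in>S'-X_b} \<not>h_b p).\<close>
definition att_event :: "('at \<Rightarrow> bool option) \<Rightarrow> 'at set \<Rightarrow> ('ag \<Rightarrow> 'at set) \<Rightarrow> ('ag, 'at) lconj" where
  "att_event L S' X = (\<lambda>x. case x of
      P p \<Rightarrow> (if p \<in> S' then L p else None)
    | H b p \<Rightarrow> (if p \<in> S' then Some (p \<in> X b) else None))"

definition F_events :: "('at \<Rightarrow> bool option) \<Rightarrow> ('ag, 'at) lconj set" where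
  "F_events L = {att_event L S' X | S' X. S' \<subseteq> dom L \<and> (\<forall>b. X b \<subseteq> S')}"

definition F_model :: "('at \<Rightarrow> bool option) \<Rightarrow> ('ag, 'at, ('ag, 'at) lconj) evmodel" where
  "F_model L =
    \<lparr> eE = F_events L,
      eQ = (\<lambda>b. {(e, f). e \<in> F_events L \<and> f \<in> F_events L \<and>
                 (\<forall>p \<in> dom L.
                    (e (H b p) = Some True \<longrightarrow> f (H b p) = Some True \<and> f (P p) = L p) \<and>
                    (e (H b p) \<noteq> Some True \<longrightarrow> f (P p) \<noteq> L p))}),
      epre = id,
      eEd = {e \<in> F_events L. \<forall>p \<in> dom L. e (P p) = L p} \<rparr>"

definition bisimilar :: "('ag, 'at, 'w) kmodel \<Rightarrow> 'w \<Rightarrow> ('ag, 'at, 'v) kmodel \<Rightarrow> 'v \<Rightarrow> bool" where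
  "bisimilar M w N v \<longleftrightarrow>
    (\<exists>Z. Z \<subseteq> kW M \<times> kW N \<and> (w, v) \<in> Z \<and>
      (\<forall>(x, y) \<in> Z. kV M x = kV N y \<and>
         (\<forall>a x'. (x, x') \<in> kR M a \<longrightarrow> (\<exists>y'. (y, y') \<in> kR N a \<and> (x', y') \<in> Z)) \<and>
         (\<forall>a y'. (y, y') \<in> kR N a \<longrightarrow> (\<exists>x'. (x, x') \<in> kR M a \<and> (x', y') \<in> Z))))"

end

theory Submission imports Defs begin

lemma FE_char: "g \<in> F_events L \<longleftrightarrow> (\<forall>p. (p \<in> dom L \<and> g (P p) = L p \<and> (\<forall>b. g (H b p) \<noteq> None)) \<or> (g (P p) = None \<and> (\<forall>b. g (H b p) = None)))"
proof
  assume "g \<in> F_events L"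
  then obtain S' X where "S' \<subseteq> dom L" "\<forall>b. X b \<subseteq> S'" "g = att_event L S' X"
    unfolding F_events_def by blast
  then show "\<forall>p. (p \<in> dom L \<and> g (P p) = L p \<and> (\<forall>b. g (H b p) \<noteq> None)) \<or> (g (P p) = None \<and> (\<forall>b. g (H b p) = None))"
    unfolding att_event_def by auto
next
  assume A: "\<forall>p. (p \<in> dom L \<and> g (P p) = L p \<and> (\<forall>b. g (H b p) \<noteq> None)) \<or> (g (P p) = None \<and> (\<forall>b. g (H b p) = None))"
  define S' where "S' = {p. g (P p) \<noteq> None}"
  define X where "X = (\<lambda>b. {p. g (H b p) = Some True})"
  have "g = att_event L S' X"
  proof
    fix x show "g x = att_event L S' X x"
    proof (cases x)
      case (P p) then show ?thesis using A[rule_format, of p] by (auto simp: att_event_def S'_def)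
    next
      case (H b p)
      have "(p \<in> dom L \<and> g (P p) = L p \<and> g (H b p) \<noteq> None) \<or> (g (P p) = None \<and> g (H b p) = None)"
        using A by blast
      then show ?thesis using H
        by (cases "g (H b p)") (auto simp: att_event_def S'_def X_def)
    qed
  qed
  moreover have "S' \<subseteq> dom L" using A unfolding S'_def by fastforce
  moreover have "\<forall>b. X b \<subseteq> S'"
  proof (intro allI subsetI)
    fix b p assume "p \<in> X b"
    then have "g (H b p) = Some True" by (simp add: X_def)
    then show "p \<in> S'" using A[rule_format, of p] unfolding S'_def by auto
  qed
  ultimately show "g \<in> F_events L" unfolding F_events_def by blast
qed

definition e0 :: "('ag, 'at, 'w) kmodel \<Rightarrow> 'w \<Rightarrow> ('at \<Rightarrow> bool option) \<Rightarrow> ('ag, 'at) lconj" where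
  "e0 M w L = (\<lambda>x. case x of P p \<Rightarrow> L p | H b p \<Rightarrow> if p \<in> dom L then Some (H b p \<in> kV M w) else None)"

lemma e0_in: "e0 M w L \<in> F_events L"
  unfolding FE_char e0_def by auto

lemma e0_sat: "sat_lc M w (prop_conj L) \<Longrightarrow> sat_lc M w (e0 M w L)"
  unfolding sat_lc_def
proof (intro allI impI)
  fix x b assume a: "\<forall>x b. prop_conj L x = Some b \<longrightarrow> (x \<in> kV M w) = b" and e: "e0 M w L x = Some b"
  show "(x \<in> kV M w) = b"
  proof (cases x)
    case (P p) then show ?thesis using a[rule_format, of x b] e by (simp add: e0_def prop_conj_def)
  next
    case (H c p) then show ?thesis using e by (simp add: e0_def split: if_splits)
  qed
qed

lemma e0_unique:
  assumes "g \<in> eEd (F_model L)" "sat_lc M w g" shows "g = e0 M w L"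
proof
  fix x
  have g: "g \<in> F_events L" "\<forall>p\<in>dom L. g (P p) = L p" using assms(1) by (auto simp: F_model_def)
  note C = FE_char[THEN iffD1, OF g(1)]
  show "g x = e0 M w L x"
  proof (cases x)
    case (P p)
    show ?thesis
    proof (cases "p \<in> dom L")
      case True then show ?thesis using P g(2) by (simp add: e0_def)
    next
      case False
      then have "g (P p) = None" using C[rule_format, of p] by blast
      then show ?thesis using P False by (simp add: e0_def domIff)
    qed
  next
    case (H b p)
    show ?thesis
    proof (cases "p \<in> dom L")
      case True
      have "g (P p) = L p" using g(2) True by blast
      then have "g (P p) \<noteq> None" using True by auto
      then have "g (H b p) \<noteq> None" using C[rule_format, of p] by auto
      then obtain c where c: "g (H b p) = Some c" by blast
      then have "H b p \<in> kV M w \<longleftrightarrow> c" using assms(2) by (auto simp: sat_lc_def)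
      then show ?thesis using c True H by (auto simp: e0_def)
    next
      case False
      then have "g (H b p) = None" using C[rule_format, of p] by blast
      then show ?thesis using H False by (simp add: e0_def)
    qed
  qed
qed

lemma app:
  assumes "sat_lc M w (prop_conj L)"
  shows "applicable M w (F_model L) \<and> upd_point M w (F_model L) = e0 M w L"
proof -
  have ed: "e0 M w L \<in> eEd (F_model L)" using e0_in by (auto simp: F_model_def e0_def)
  have s: "sat_lc M w (epre (F_model L) (e0 M w L))" using e0_sat[OF assms] by (simp add: F_model_def)
  have u: "g = e0 M w L" if "g \<in> eEd (F_model L) \<and> sat_lc M w (epre (F_model L) g)" for g
    using that by (intro e0_unique) (auto simp: F_model_def)
  show ?thesis unfolding applicable_def upd_point_def
  proof
    show "\<exists>!e. e \<in> eEd (F_model L) \<and> sat_lc M w (epre (F_model L) e)"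
      using ed s u by metis
    show "(THE e. e \<in> eEd (F_model L) \<and> sat_lc M w (epre (F_model L) e)) = e0 M w L"
      using ed s u by (metis (no_types, lifting) the_equality)
  qed
qed


lemma dom_restr: "S \<subseteq> dom L \<Longrightarrow> dom (L |` S) = S"
  by auto

lemma FE_restr:
  assumes "S \<subseteq> dom L"
  shows "g \<in> F_events (L |` S) \<longleftrightarrow> g \<in> F_events L \<and> (\<forall>p. p \<notin> S \<longrightarrow> g (P p) = None)"
proof -
  have d: "dom (L |` S) = S" using assms by auto
  show ?thesis unfolding FE_char d
  proof (intro iffI conjI allI impI)
    fix p
    assume A: "\<forall>p. p \<in> S \<and> g (P p) = (L |` S) p \<and> (\<forall>b. g (H b p) \<noteq> None) \<or> g (P p) = None \<and> (\<forall>b. g (H b p) = None)"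
    show "p \<in> dom L \<and> g (P p) = L p \<and> (\<forall>b. g (H b p) \<noteq> None) \<or> g (P p) = None \<and> (\<forall>b. g (H b p) = None)"
      using A[rule_format, of p] assms by auto
  next
    fix p
    assume A: "\<forall>p. p \<in> S \<and> g (P p) = (L |` S) p \<and> (\<forall>b. g (H b p) \<noteq> None) \<or> g (P p) = None \<and> (\<forall>b. g (H b p) = None)"
      and "p \<notin> S"
    then show "g (P p) = None" using A[rule_format, of p] by auto
  next
    fix p
    assume A: "(\<forall>p. p \<in> dom L \<and> g (P p) = L p \<and> (\<forall>b. g (H b p) \<noteq> None) \<or> g (P p) = None \<and> (\<forall>b. g (H b p) = None)) \<and>
      (\<forall>p. p \<notin> S \<longrightarrow> g (P p) = None)"
    show "p \<in> S \<and> g (P p) = (L |` S) p \<and> (\<forall>b. g (H b p) \<noteq> None) \<or> g (P p) = None \<and> (\<forall>b. g (H b p) = None)"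
    proof (cases "p \<in> S")
      case True then show ?thesis using A[THEN conjunct1, rule_format, of p] by (auto simp: restrict_map_def)
    next
      case False
      then have "g (P p) = None" using A by blast
      moreover have "p \<in> dom L \<longrightarrow> L p \<noteq> None" by auto
      ultimately show ?thesis using A by (metis)
    qed
  qed
qed

lemma Q_eq:
  assumes "S \<subseteq> dom L" "g \<in> F_events (L |` S)"
  shows "(g, h) \<in> eQ (F_model L) b \<longleftrightarrow> (g, h) \<in> eQ (F_model (L |` S)) b"
proof -
  have d: "dom (L |` S) = S" using assms by auto
  have gL: "g \<in> F_events L" using assms FE_restr by blast
  have gN: "g (H b p) = None" if "p \<notin> S" for p
  proof -
    have "g (P p) = None" using assms FE_restr that by blast
    then show ?thesis using FE_char[THEN iffD1, OF gL, rule_format, of p] by auto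
  qed
  show ?thesis
  proof
    assume q: "(g, h) \<in> eQ (F_model L) b"
    then have hL: "h \<in> F_events L" and
      c: "\<forall>p \<in> dom L. (g (H b p) = Some True \<longrightarrow> h (H b p) = Some True \<and> h (P p) = L p) \<and>
                    (g (H b p) \<noteq> Some True \<longrightarrow> h (P p) \<noteq> L p)"
      by (auto simp: F_model_def)
    have hN: "h (P p) = None" if "p \<notin> S" for p
    proof (cases "p \<in> dom L")
      case True
      then have "h (P p) \<noteq> L p" using c gN[OF that] by auto
      then show ?thesis using FE_char[THEN iffD1, OF hL, rule_format, of p] by auto
    next
      case False then show ?thesis using FE_char[THEN iffD1, OF hL, rule_format, of p] by auto
    qed
    have hS: "h \<in> F_events (L |` S)" using FE_restr[OF assms(1)] hL hN by blast
    have c2: "\<forall>p \<in> S. (g (H b p) = Some True \<longrightarrow> h (H b p) = Some True \<and> h (P p) = (L |` S) p) \<and>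
                    (g (H b p) \<noteq> Some True \<longrightarrow> h (P p) \<noteq> (L |` S) p)"
    proof
      fix p assume p: "p \<in> S"
      then have "p \<in> dom L" using assms(1) by blast
      then show "(g (H b p) = Some True \<longrightarrow> h (H b p) = Some True \<and> h (P p) = (L |` S) p) \<and>
                    (g (H b p) \<noteq> Some True \<longrightarrow> h (P p) \<noteq> (L |` S) p)"
        using c p by simp
    qed
    show "(g, h) \<in> eQ (F_model (L |` S)) b"
      unfolding F_model_def using assms(2) hS c2 d by simp
  next
    assume q: "(g, h) \<in> eQ (F_model (L |` S)) b"
    then have hS: "h \<in> F_events (L |` S)" and
      c: "\<forall>p \<in> dom L \<inter> S. (g (H b p) = Some True \<longrightarrow> h (H b p) = Some True \<and> h (P p) = L p) \<and>
                    (g (H b p) \<noteq> Some True \<longrightarrow> h (P p) \<noteq> L p)"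
      by (auto simp: F_model_def)
    have hL: "h \<in> F_events L" using FE_restr[OF assms(1)] hS by blast
    have hN: "h (P p) = None" if "p \<notin> S" for p using FE_restr[OF assms(1)] hS that by blast
    have "\<forall>p \<in> dom L. (g (H b p) = Some True \<longrightarrow> h (H b p) = Some True \<and> h (P p) = L p) \<and>
                    (g (H b p) \<noteq> Some True \<longrightarrow> h (P p) \<noteq> L p)"
    proof
      fix p assume p: "p \<in> dom L"
      show "(g (H b p) = Some True \<longrightarrow> h (H b p) = Some True \<and> h (P p) = L p) \<and>
                    (g (H b p) \<noteq> Some True \<longrightarrow> h (P p) \<noteq> L p)"
      proof (cases "p \<in> S")
        case True then show ?thesis using c p by auto
      next
        case False then show ?thesis using gN[OF False] hN[OF False] p by auto
      qed
    qed
    then show "(g, h) \<in> eQ (F_model L) b"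
      unfolding F_model_def using gL hL by auto
  qed
qed


lemma Q_dep:
  assumes "g \<in> F_events L" "g' \<in> F_events L" "\<forall>p\<in>dom L. (g (H a p) = Some True \<longleftrightarrow> g' (H a p) = Some True)"
  shows "(g, f) \<in> eQ (F_model L) a \<longleftrightarrow> (g', f) \<in> eQ (F_model L) a"
  using assms unfolding F_model_def by auto

lemma prodW: "(w, e) \<in> kW (product M Ev) \<longleftrightarrow> w \<in> kW M \<and> e \<in> eE Ev \<and> sat_lc M w (epre Ev e)"
  by (simp add: product_def Let_def)

lemma prodR: "((w, e), (v, f)) \<in> kR (product M Ev) a \<longleftrightarrow>
   (w, e) \<in> kW (product M Ev) \<and> (v, f) \<in> kW (product M Ev) \<and> (w, v) \<in> kR M a \<and> (e, f) \<in> eQ Ev a"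
  by (simp add: product_def Let_def)

lemma prodV: "kV (product M Ev) (w, e) = kV M w"
  by (simp add: product_def Let_def)

lemma restr_sat: "sat_lc M w (prop_conj L) \<Longrightarrow> sat_lc M w (prop_conj (L |` S))"
  unfolding sat_lc_def prop_conj_def
  by (auto simp: restrict_map_def split: patom.splits if_splits)

theorem lemma4p1:
  fixes M :: "('ag :: finite, 'at :: finite, 'w) kmodel"
    and w :: 'w and a :: 'ag
    and L :: "'at \<Rightarrow> bool option"
    and S :: "'at set"
  assumes "kripke M"
    and "w \<in> kW M"
    and "sat_lc M w (prop_conj L)"
    and "S \<subseteq> dom L"
    and "\<forall>p \<in> dom L. (p \<in> S \<longrightarrow> H a p \<in> kV M w) \<and> (p \<notin> S \<longrightarrow> H a p \<notin> kV M w)"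
  shows "applicable M w (F_model L) \<and> applicable M w (F_model (L |` S)) \<and>
    (let e = upd_point M w (F_model L);
         e' = upd_point M w (F_model (L |` S));
         M1 = product M (F_model L);
         M2 = product M (F_model (L |` S))
     in succs (kR M1 a) (w, e) = succs (kR M2 a) (w, e') \<and>
        (\<forall>vf \<in> succs (kR M1 a) (w, e). bisimilar M1 vf M2 vf))"
proof -
  note A1 = app[OF assms(3)]
  note A2 = app[OF restr_sat[OF assms(3)], of S]
  define M1 where "M1 = product M (F_model L)"
  define M2 where "M2 = product M (F_model (L |` S))"
  define e where "e = e0 M w L"
  define e' where "e' = e0 M w (L |` S)"
  have eL: "e \<in> F_events L" unfolding e_def by (rule e0_in)
  have eS: "e' \<in> F_events (L |` S)" unfolding e'_def by (rule e0_in)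
  have eS': "e' \<in> F_events L" using eS FE_restr[OF assms(4)] by blast
  have we: "(w, e) \<in> kW M1" unfolding M1_def prodW using assms(2) eL e0_sat[OF assms(3)]
    by (simp add: F_model_def e_def)
  have we': "(w, e') \<in> kW M2" unfolding M2_def prodW using assms(2) eS e0_sat[OF restr_sat[OF assms(3)]]
    by (simp add: F_model_def e'_def)
  have W21: "kW M2 \<subseteq> kW M1"
  proof
    fix x assume "x \<in> kW M2"
    then show "x \<in> kW M1" unfolding M1_def M2_def using FE_restr[OF assms(4)]
      by (cases x) (auto simp: prodW F_model_def)
  qed
  have Hsame: "\<forall>p\<in>dom L. (e (H a p) = Some True \<longleftrightarrow> e' (H a p) = Some True)"
    using assms(5) assms(4) by (auto simp: e_def e'_def e0_def restrict_map_def)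
  have QQ: "(e, f) \<in> eQ (F_model L) a \<longleftrightarrow> (e', f) \<in> eQ (F_model (L |` S)) a" for f
    using Q_dep[OF eL eS' Hsame] Q_eq[OF assms(4) eS] by blast
  have sub: "x \<in> kW M2 \<and> (x, y) \<in> kR M1 b \<longleftrightarrow> x \<in> kW M2 \<and> (x, y) \<in> kR M2 b" for x y b
  proof (cases x, cases y)
    fix u g v h assume x: "x = (u, g)" and y: "y = (v, h)"
    show ?thesis
    proof (cases "x \<in> kW M2")
      case True
      then have g: "g \<in> F_events (L |` S)" unfolding x M2_def prodW by (simp add: F_model_def)
      show ?thesis
      proof
        assume "x \<in> kW M2 \<and> (x, y) \<in> kR M1 b"
        then have r: "(u, v) \<in> kR M b" "(g, h) \<in> eQ (F_model L) b" "(v, h) \<in> kW M1"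
          unfolding x y M1_def prodR by auto
        have q: "(g, h) \<in> eQ (F_model (L |` S)) b" using r(2) Q_eq[OF assms(4) g] by blast
        then have "h \<in> F_events (L |` S)" by (simp add: F_model_def)
        then have "(v, h) \<in> kW M2" using r(3) unfolding M1_def M2_def prodW by (simp add: F_model_def)
        then show "x \<in> kW M2 \<and> (x, y) \<in> kR M2 b" using True r q unfolding x y M2_def prodR by simp
      next
        assume "x \<in> kW M2 \<and> (x, y) \<in> kR M2 b"
        then have r: "(u, v) \<in> kR M b" "(g, h) \<in> eQ (F_model (L |` S)) b" "(v, h) \<in> kW M2" "(u, g) \<in> kW M2"
          unfolding x y M2_def prodR by auto
        have q: "(g, h) \<in> eQ (F_model L) b" using r(2) Q_eq[OF assms(4) g] by blast
        show "x \<in> kW M2 \<and> (x, y) \<in> kR M1 b" using True r q W21 unfolding x y M1_def prodR by auto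
      qed
    qed simp
  qed
  have succ: "succs (kR M1 a) (w, e) = succs (kR M2 a) (w, e')"
  proof (rule set_eqI)
    fix y show "y \<in> succs (kR M1 a) (w, e) \<longleftrightarrow> y \<in> succs (kR M2 a) (w, e')"
    proof (cases y)
      case (Pair v f)
      have "(v, f) \<in> kW M1 \<and> (e, f) \<in> eQ (F_model L) a \<longleftrightarrow> (v, f) \<in> kW M2 \<and> (e', f) \<in> eQ (F_model (L |` S)) a"
      proof
        assume h: "(v, f) \<in> kW M1 \<and> (e, f) \<in> eQ (F_model L) a"
        then have "(e', f) \<in> eQ (F_model (L |` S)) a" using QQ by blast
        then have "f \<in> F_events (L |` S)" by (simp add: F_model_def)
        then have "(v, f) \<in> kW M2" using h unfolding M1_def M2_def prodW by (simp add: F_model_def)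
        then show "(v, f) \<in> kW M2 \<and> (e', f) \<in> eQ (F_model (L |` S)) a" using h QQ by blast
      next
        assume "(v, f) \<in> kW M2 \<and> (e', f) \<in> eQ (F_model (L |` S)) a"
        then show "(v, f) \<in> kW M1 \<and> (e, f) \<in> eQ (F_model L) a" using W21 QQ by blast
      qed
      then show ?thesis using Pair we we' by (simp add: succs_def M1_def M2_def prodR) blast
    qed
  qed
  have bis: "bisimilar M1 vf M2 vf" if vf: "vf \<in> kW M2" for vf
    unfolding bisimilar_def
  proof (intro exI[of _ "Id_on (kW M2)"] conjI)
    show "Id_on (kW M2) \<subseteq> kW M1 \<times> kW M2" using W21 by auto
    show "(vf, vf) \<in> Id_on (kW M2)" using vf by auto
    show "\<forall>(x, y) \<in> Id_on (kW M2). kV M1 x = kV M2 y \<and>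
         (\<forall>a x'. (x, x') \<in> kR M1 a \<longrightarrow> (\<exists>y'. (y, y') \<in> kR M2 a \<and> (x', y') \<in> Id_on (kW M2))) \<and>
         (\<forall>a y'. (y, y') \<in> kR M2 a \<longrightarrow> (\<exists>x'. (x, x') \<in> kR M1 a \<and> (x', y') \<in> Id_on (kW M2)))"
    proof (clarify)
      fix x assume x: "x \<in> kW M2"
      have R2W: "(x, x') \<in> kR M2 b \<Longrightarrow> x' \<in> kW M2" for x' b
        unfolding M2_def by (cases x, cases x') (simp add: prodR)
      show "kV M1 x = kV M2 x \<and>
         (\<forall>a x'. (x, x') \<in> kR M1 a \<longrightarrow> (\<exists>y'. (x, y') \<in> kR M2 a \<and> (x', y') \<in> Id_on (kW M2))) \<and>
         (\<forall>a y'. (x, y') \<in> kR M2 a \<longrightarrow> (\<exists>x'. (x, x') \<in> kR M1 a \<and> (x', y') \<in> Id_on (kW M2)))"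
      proof (intro conjI allI impI)
        show "kV M1 x = kV M2 x" unfolding M1_def M2_def by (cases x) (simp add: prodV)
        fix b x' assume "(x, x') \<in> kR M1 b"
        then have "(x, x') \<in> kR M2 b" using sub[of x x' b] x by blast
        then show "\<exists>y'. (x, y') \<in> kR M2 b \<and> (x', y') \<in> Id_on (kW M2)" using R2W by blast
      next
        fix b y' assume "(x, y') \<in> kR M2 b"
        then have "(x, y') \<in> kR M1 b" using sub[of x y' b] x by blast
        then show "\<exists>x'. (x, x') \<in> kR M1 b \<and> (x', y') \<in> Id_on (kW M2)" using R2W \<open>(x, y') \<in> kR M2 b\<close> by blast
      qed
    qed
  qed
  have "\<forall>vf \<in> succs (kR M1 a) (w, e). bisimilar M1 vf M2 vf"
  proof
    fix vf assume "vf \<in> succs (kR M1 a) (w, e)"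
    then have "vf \<in> succs (kR M2 a) (w, e')" using succ by simp
    then have "vf \<in> kW M2" unfolding succs_def M2_def by (cases vf) (simp add: prodR)
    then show "bisimilar M1 vf M2 vf" by (rule bis)
  qed
  then show ?thesis using A1 A2 succ unfolding Let_def M1_def M2_def e_def e'_def by simp
qed

end
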